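(* For every $\theta=(I,E,h)$ with $I=(I_1,\dots,I_{|I|})$ a partition of $\{1,\dots,d\}$, $E\in\mathcal E_\eta$ and $h=(h_1,\dots,h_d)$ with positive entries, the kernel $K_\theta$ satisfies $$\int K_\theta(t)dt=1,\qquad\|K_\theta\|_1\le(2|I|-1)\|g\|_1^d,\qquad\|K_\theta\|_2\le|\det E|^{1/2}\|g\|_2^d\Big(\sum_{i=1}^{|I|}\prod_{j\in I_i}h_j^{-1/2}+|I|-1\Big).$$
   Context: $g:[-1/2,1/2]\to\mathbb R$ is a univariate kernel with $\int g=1$, $\int g(x)x^kdx=0$ for $k=1,\dots,\ell$, and $g\in C^1$ (Assumption G). For fixed $\eta>0$, $\mathcal E_\eta=\{E=(e_1,\dots,e_d):e_i\in\mathbb S^{d-1},|\det E|\ge\eta\}$. $G_0(t)=\prod_{i=1}^dg(t_i)$, $G_{i,h}(t)=\prod_{j\in I_i}h_j^{-1}g(t_j/h_j)\prod_{j\notin I_i}g(t_j)$, and $K_\theta(t)=|\det E|\sum_{i=1}^{|I|}G_{i,h}(E^Tt)-(|I|-1)|\det E|\,G_0(E^Tt)$, $t\in\mathbb R^d$. Norms $\|\cdot\|_1,\|\cdot\|_2$ are $\mathbb L_1,\mathbb L_2$ norms over $\mathbb R^d$ (resp. $\mathbb R$ for $g$). *)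

theory Defs
  imports "HOL-Analysis.Analysis" "HOL-Library.Disjoint_Sets"
begin

text \<open>Assumption G on the univariate kernel g, supported on [-1/2,1/2] (extended by zero).\<close>
definition assumption_G :: "nat \<Rightarrow> (real \<Rightarrow> real) \<Rightarrow> bool" where
  "assumption_G l g \<longleftrightarrow>
     (\<forall>x. x \<notin> {-1/2..1/2} \<longrightarrow> g x = 0) \<and>
     (g has_integral 1) {-1/2..1/2} \<and>
     (\<forall>k\<in>{1..l}. ((\<lambda>x. g x * x ^ k) has_integral 0) {-1/2..1/2}) \<and>
     g C1_differentiable_on {-1/2..1/2}"

text \<open>The class E_eta: matrices whose columns e_i are unit vectors, with |det E| >= eta.\<close>
definition E_eta :: "real \<Rightarrow> (real^'n^'n) set" where
  "E_eta \<eta> = {E. (\<forall>i. norm (column i E) = 1) \<and> \<bar>det E\<bar> \<ge> \<eta>}"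

definition G0 :: "(real \<Rightarrow> real) \<Rightarrow> real^'n \<Rightarrow> real" where
  "G0 g t = (\<Prod>j\<in>UNIV. g (t $ j))"

definition Gh :: "(real \<Rightarrow> real) \<Rightarrow> 'n set \<Rightarrow> real^'n \<Rightarrow> real^'n \<Rightarrow> real" where
  "Gh g A h t = (\<Prod>j\<in>A. g (t $ j / h $ j) / h $ j) * (\<Prod>j\<in>UNIV - A. g (t $ j))"

text \<open>K_theta for theta = (P, E, h); P is the partition (blocks I_1..I_|I|), E^T t = transpose E *v t.\<close>
definition Ktheta :: "(real \<Rightarrow> real) \<Rightarrow> 'n set set \<Rightarrow> real^'n^'n \<Rightarrow> real^'n \<Rightarrow> real^'n \<Rightarrow> real" where
  "Ktheta g P E h t =
     \<bar>det E\<bar> * (\<Sum>A\<in>P. Gh g A h (transpose E *v t))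
     - (real (card P) - 1) * \<bar>det E\<bar> * G0 g (transpose E *v t)"

end

theory Submission
  imports Defs
begin


typedef 'a wo = "UNIV :: 'a set" by auto

instance wo :: (finite) finite
proof
  have "(UNIV :: 'a wo set) = Abs_wo ` UNIV"
    by (metis Rep_wo_inverse surj_def)
  then show "finite (UNIV :: 'a wo set)" by (metis finite_imageI finite)
qed

instantiation wo :: (finite) linorder
begin
definition less_eq_wo :: "'a wo \<Rightarrow> 'a wo \<Rightarrow> bool" where
  "less_eq_wo x y \<longleftrightarrow> to_nat (Rep_wo x) \<le> to_nat (Rep_wo y)"
definition less_wo :: "'a wo \<Rightarrow> 'a wo \<Rightarrow> bool" where
  "less_wo x y \<longleftrightarrow> to_nat (Rep_wo x) < to_nat (Rep_wo y)"
instance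
proof
  fix x y z :: "'a wo"
  show "(x < y) = (x \<le> y \<and> \<not> y \<le> x)" by (auto simp: less_eq_wo_def less_wo_def)
  show "x \<le> x" by (auto simp: less_eq_wo_def)
  show "x \<le> y \<Longrightarrow> y \<le> z \<Longrightarrow> x \<le> z" by (auto simp: less_eq_wo_def)
  show "x \<le> y \<Longrightarrow> y \<le> x \<Longrightarrow> x = y"
    by (auto simp: less_eq_wo_def Rep_wo_inject[symmetric])
  show "x \<le> y \<or> y \<le> x" by (auto simp: less_eq_wo_def)
qed
end

instance wo :: (finite) wellorder
proof
  fix P :: "'a wo \<Rightarrow> bool" and a
  assume H: "\<And>x. (\<And>y. y < x \<Longrightarrow> P y) \<Longrightarrow> P x"
  have "\<forall>x. to_nat (Rep_wo x) = n \<longrightarrow> P x" for n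
  proof (induction n rule: less_induct)
    case (less n)
    show ?case using H less by (auto simp: less_wo_def)
  qed
  then show "P a" by blast
qed



lemma Basis_cart_real: "(Basis :: (real^'a) set) = range (\<lambda>i. axis i 1)"
  by (auto simp: Basis_vec_def)

lemma prod_Basis_cart:
  "(\<Prod>b\<in>(Basis :: (real^'a) set). f b) = (\<Prod>i\<in>UNIV. f (axis i 1))"
  unfolding Basis_cart_real
  by (subst prod.reindex) (auto simp: inj_on_def axis_eq_axis)

definition RL :: "real^'n \<Rightarrow> real^('n wo)" where
  "RL x = (\<chi> i. x $ Rep_wo i)"
definition RLi :: "real^('n wo) \<Rightarrow> real^'n" where
  "RLi y = (\<chi> j. y $ Abs_wo j)"

lemma RLi_RL [simp]: "RLi (RL x) = x"
  by (simp add: RL_def RLi_def Abs_wo_inverse vec_eq_iff)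
lemma RL_RLi [simp]: "RL (RLi y) = y"
  by (simp add: RL_def RLi_def Rep_wo_inverse vec_eq_iff)

lemma linear_RL: "linear RL"
  by (auto simp: linear_iff RL_def vec_eq_iff)
lemma linear_RLi: "linear RLi"
  by (auto simp: linear_iff RLi_def vec_eq_iff)

lemma RL_meas [measurable]: "RL \<in> borel_measurable borel"
  by (intro borel_measurable_continuous_onI linear_continuous_on linear_conv_bounded_linear[THEN iffD1] linear_RL)
lemma RLi_meas [measurable]: "RLi \<in> borel_measurable borel"
  by (intro borel_measurable_continuous_onI linear_continuous_on linear_conv_bounded_linear[THEN iffD1] linear_RLi)

lemma prod_wo: "(\<Prod>i\<in>UNIV. f (i::'n::finite wo)) = (\<Prod>j\<in>UNIV. f (Abs_wo j))"
proof -
  have "(\<Prod>j\<in>UNIV. f (Abs_wo j)) = prod f (Abs_wo ` UNIV)"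
    by (rule prod.reindex[symmetric, unfolded o_def]) (auto simp: inj_on_def Abs_wo_inject)
  also have "Abs_wo ` UNIV = UNIV" by (metis Rep_wo_inverse surj_def)
  finally show ?thesis by simp
qed

lemma distr_RL: "distr lborel borel (RL :: real^'n::finite \<Rightarrow> _) = lborel"
proof (rule lborel_eqI[symmetric])
  fix l u :: "real^('n wo)"
  assume le: "\<And>b. b \<in> Basis \<Longrightarrow> l \<bullet> b \<le> u \<bullet> b"
  have le': "l $ i \<le> u $ i" for i using le[of "axis i 1"] by (simp add: cart_eq_inner_axis)
  have pre: "RL -` box l u = box (RLi l) (RLi u)"
    by (auto simp: mem_box_cart RL_def RLi_def; metis Abs_wo_inverse Rep_wo_inverse UNIV_I)+
  have "emeasure (distr lborel borel RL) (box l u) = emeasure lborel (box (RLi l) (RLi u))"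
    by (subst emeasure_distr) (auto simp: pre)
  also have "\<dots> = (\<Prod>b\<in>Basis. (RLi u - RLi l) \<bullet> b)"
    using le' by (subst emeasure_lborel_box) (auto simp: Basis_vec_def RLi_def inner_axis)
  also have "(\<Prod>b\<in>Basis. (RLi u - RLi l) \<bullet> b) = (\<Prod>b\<in>Basis. (u - l) \<bullet> b)"
    unfolding prod_Basis_cart by (simp add: inner_axis RLi_def prod_wo[of "\<lambda>i. u $ i - l $ i"])
  finally show "emeasure (distr lborel borel RL) (box l u) = (\<Prod>b\<in>Basis. (u - l) \<bullet> b)" .
qed simp



lemma inv_into_Rep_wo: "inv_into UNIV Rep_wo = Abs_wo"
  by (rule ext, rule inv_into_f_eq) (auto simp: Abs_wo_inverse inj_on_def Rep_wo_inject)

lemma map_perm_Rep: "map_permutation UNIV Rep_wo q = Rep_wo \<circ> q \<circ> Abs_wo"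
proof -
  have "range Rep_wo = UNIV" by (metis Abs_wo_inverse UNIV_I surjI)
  then show ?thesis
    by (auto simp: map_permutation_def restrict_id_def inv_into_Rep_wo fun_eq_iff)
qed

lemma det_RL:
  fixes M :: "real^'n::finite^'n"
  shows "det (\<chi> i k. M $ Rep_wo i $ Rep_wo k) = det M"
proof -
  let ?M = "(\<chi> i k. M $ Rep_wo i $ Rep_wo k) :: real^('n wo)^('n wo)"
  have "det ?M = (\<Sum>q\<in>{q. q permutes (UNIV :: 'n wo set)}. of_int (sign q) * (\<Prod>i\<in>UNIV. ?M $ i $ q i))"
    by (simp add: det_def)
  also have "\<dots> = (\<Sum>p\<in>{p. p permutes (UNIV :: 'n set)}. of_int (sign p) * (\<Prod>i\<in>UNIV. M $ i $ p i))"
  proof (rule sum.reindex_bij_witness[where i="\<lambda>p. Abs_wo \<circ> p \<circ> Rep_wo" and j="\<lambda>q. Rep_wo \<circ> q \<circ> Abs_wo"])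
    fix q :: "'n wo \<Rightarrow> 'n wo" assume q: "q \<in> {q. q permutes UNIV}"
    show "Abs_wo \<circ> (Rep_wo \<circ> q \<circ> Abs_wo) \<circ> Rep_wo = q"
      by (auto simp: fun_eq_iff Rep_wo_inverse Abs_wo_inverse)
    have "(Rep_wo \<circ> q \<circ> Abs_wo) permutes UNIV"
      proof -
      have "bij Rep_wo" unfolding bij_def
        by (metis Abs_wo_inverse UNIV_I Rep_wo_inject injI surjI)
      then show ?thesis using q unfolding map_perm_Rep[symmetric] by (intro map_permutation_permutes) auto
    qed
    then show "Rep_wo \<circ> q \<circ> Abs_wo \<in> {p. p permutes UNIV}" by simp
    have s: "sign (Rep_wo \<circ> q \<circ> Abs_wo) = sign q"
      unfolding map_perm_Rep[symmetric] using q
      by (intro sign_map_permutation) (auto simp: inj_on_def Rep_wo_inject)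
    have pr: "(\<Prod>i\<in>UNIV. ?M $ i $ q i) = (\<Prod>i\<in>UNIV. M $ i $ (Rep_wo \<circ> q \<circ> Abs_wo) i)"
      by (simp add: prod_wo[of "\<lambda>i. M $ Rep_wo i $ Rep_wo (q i)"] Abs_wo_inverse)
    show "of_int (sign (Rep_wo \<circ> q \<circ> Abs_wo)) * (\<Prod>i\<in>UNIV. M $ i $ (Rep_wo \<circ> q \<circ> Abs_wo) i) =
          of_int (sign q) * (\<Prod>i\<in>UNIV. ?M $ i $ q i)"
      using s pr by simp
  next
    fix p :: "'n \<Rightarrow> 'n" assume p: "p \<in> {p. p permutes UNIV}"
    show "Rep_wo \<circ> (Abs_wo \<circ> p \<circ> Rep_wo) \<circ> Abs_wo = p"
      by (auto simp: fun_eq_iff Rep_wo_inverse Abs_wo_inverse)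
    show "Abs_wo \<circ> p \<circ> Rep_wo \<in> {q. q permutes UNIV}"
    proof -
      have "bij Rep_wo" unfolding bij_def
        by (metis Abs_wo_inverse UNIV_I Rep_wo_inject injI surjI)
      moreover have "bij Abs_wo" unfolding bij_def
        by (metis Abs_wo_inverse Rep_wo_inverse UNIV_I injI surjI)
      moreover have "bij p" using p permutes_bij by auto
      ultimately have "bij (Abs_wo \<circ> p \<circ> Rep_wo)" by (intro bij_comp)
      then show ?thesis by (auto intro: bij_imp_permutes)
    qed
  qed
  also have "\<dots> = det M" by (simp add: det_def)
  finally show ?thesis .
qed



lemma sum_wo: "(\<Sum>i\<in>UNIV. f (i::'n::finite wo)) = (\<Sum>j\<in>UNIV. f (Abs_wo j))"
proof -
  have "(\<Sum>j\<in>UNIV. f (Abs_wo j)) = sum f (Abs_wo ` UNIV)"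
    by (rule sum.reindex[symmetric, unfolded o_def]) (auto simp: inj_on_def Abs_wo_inject)
  also have "Abs_wo ` UNIV = UNIV" by (metis Rep_wo_inverse surj_def)
  finally show ?thesis by simp
qed

lemma abs_int_lborel:
  fixes f :: "'a::euclidean_space \<Rightarrow> real"
  assumes "f \<in> borel_measurable borel"
  shows "f absolutely_integrable_on UNIV \<longleftrightarrow> integrable lborel f"
  unfolding absolutely_integrable_on_def set_integrable_def
  using assms by (simp add: integrable_completion)

lemma CVn:
  fixes M :: "real^'n::finite^'n" and F :: "real^'n \<Rightarrow> real"
  assumes det: "det M \<noteq> 0" and Fm [measurable]: "F \<in> borel_measurable borel"
    and Fi: "integrable lborel F"
  shows "integrable lborel (\<lambda>t. F (M *v t)) \<and>
         integral\<^sup>L lborel (\<lambda>t. F (M *v t)) = integral\<^sup>L lborel F / \<bar>det M\<bar>"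
proof -
  define M' where "M' = ((\<chi> i k. M $ Rep_wo i $ Rep_wo k) :: real^('n wo)^('n wo))"
  define F' where "F' = (\<lambda>y. F (RLi y))"
  have dM': "det M' = det M" unfolding M'_def by (rule det_RL)
  have key: "M' *v RL t = RL (M *v t)" for t
    unfolding M'_def RL_def matrix_vector_mult_def
    by (simp add: vec_eq_iff sum_wo[of "\<lambda>k. M $ Rep_wo _ $ Rep_wo k * t $ Rep_wo k"] Abs_wo_inverse)
  have F'm [measurable]: "F' \<in> borel_measurable borel" unfolding F'_def by measurable
  have F'RL: "F' (RL t) = F t" for t by (simp add: F'_def)
  have lin: "linear (\<lambda>x. M' *v x)" by simp
  have gm [measurable]: "(\<lambda>x. F' (M' *v x)) \<in> borel_measurable borel"
    using lin by (intro measurable_compose[OF _ F'm] borel_measurable_continuous_onI linear_continuous_on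
        linear_conv_bounded_linear[THEN iffD1])
  have F'i: "integrable lborel F'"
    using Fi by (subst distr_RL[symmetric]) (simp add: integrable_distr_eq F'RL)
  have iF': "integral\<^sup>L lborel F' = integral\<^sup>L lborel F"
    by (subst distr_RL[symmetric]) (simp add: integral_distr F'RL)
  have inv: "invertible M'" using det dM' by (simp add: invertible_det_nz)
  then obtain A where A: "M' ** A = mat 1" "A ** M' = mat 1" unfolding invertible_def by blast
  have "(\<lambda>x. \<bar>det (matrix (\<lambda>x. M' *v x))\<bar> * F' (M' *v x)) absolutely_integrable_on UNIV \<and>
        integral UNIV (\<lambda>x. \<bar>det (matrix (\<lambda>x. M' *v x))\<bar> * F' (M' *v x)) = integral UNIV F'
      \<longleftrightarrow> F' absolutely_integrable_on UNIV \<and> integral UNIV F' = integral UNIV F'"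
  proof (rule cov_invertible_real[where h="\<lambda>y. A *v y" and h'="\<lambda>_ y. A *v y"])
    show "((\<lambda>x. M' *v x) has_derivative (\<lambda>x. M' *v x)) (at x within UNIV)" for x
      by (rule linear_imp_has_derivative) simp
    show "((\<lambda>x. A *v x) has_derivative (\<lambda>x. A *v x)) (at x within UNIV)" for x
      by (rule linear_imp_has_derivative) simp
    show "M' *v x \<in> UNIV \<and> A *v (M' *v x) = x" for x
      using A by (simp add: matrix_vector_mul_assoc)
    show "A *v y \<in> UNIV \<and> M' *v (A *v y) = y" for y
      using A by (simp add: matrix_vector_mul_assoc)
    show "(\<lambda>x. A *v x) \<circ> (\<lambda>x. M' *v x) = id" for y
      using A by (simp add: matrix_vector_mul_assoc fun_eq_iff)
  qed
  moreover have "F' absolutely_integrable_on UNIV" using F'i by (simp add: abs_int_lborel)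
  ultimately have c: "(\<lambda>x. \<bar>det M'\<bar> * F' (M' *v x)) absolutely_integrable_on UNIV"
     "integral UNIV (\<lambda>x. \<bar>det M'\<bar> * F' (M' *v x)) = integral UNIV F'" by auto
  have i1: "integrable lborel (\<lambda>x. \<bar>det M'\<bar> * F' (M' *v x))"
    using c(1) by (subst abs_int_lborel[symmetric]) auto
  then have i2: "integrable lborel (\<lambda>x. F' (M' *v x))" using det dM' by simp
  have e1: "integral\<^sup>L lborel (\<lambda>x. \<bar>det M'\<bar> * F' (M' *v x)) = integral\<^sup>L lborel F'"
    using c(2) i1 i2 F'i by (simp add: integral_lborel)
  have e2: "integral\<^sup>L lborel (\<lambda>x. F' (M' *v x)) = integral\<^sup>L lborel F' / \<bar>det M\<bar>"
    using e1 det dM' by (simp add: field_simps)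
  have "integrable lborel (\<lambda>t. F' (M' *v RL t))"
    using i2 by (subst (asm) distr_RL[symmetric]) (simp add: integrable_distr_eq)
  moreover have "integral\<^sup>L lborel (\<lambda>t. F' (M' *v RL t)) = integral\<^sup>L lborel (\<lambda>x. F' (M' *v x))"
    using integral_distr[OF RL_meas[unfolded measurable_lborel2[symmetric]] gm] by (simp add: distr_RL)
  ultimately show ?thesis using e2 iF' by (simp add: key F'RL)
qed



lemma PLe:
  fixes f :: "'a::euclidean_space \<Rightarrow> real \<Rightarrow> real"
  assumes fm [measurable]: "\<And>b. b \<in> Basis \<Longrightarrow> f b \<in> borel_measurable borel"
    and fi: "\<And>b. b \<in> Basis \<Longrightarrow> integrable lborel (f b)"
  shows "integrable lborel (\<lambda>x::'a. \<Prod>b\<in>Basis. f b (x \<bullet> b)) \<and>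
         integral\<^sup>L lborel (\<lambda>x::'a. \<Prod>b\<in>Basis. f b (x \<bullet> b)) = (\<Prod>b\<in>Basis. integral\<^sup>L lborel (f b))"
proof -
  interpret P: product_sigma_finite "\<lambda>_::'a. lborel :: real measure" by standard
  let ?T = "\<lambda>x. \<Sum>b\<in>Basis. x b *\<^sub>R (b::'a)"
  have Tm: "?T \<in> measurable (\<Pi>\<^sub>M b\<in>Basis. lborel) borel" by measurable
  have inn: "?T x \<bullet> b = x b" if "b \<in> Basis" for x b
    using that by (simp add: inner_sum_left inner_Basis if_distrib cong: if_cong)
  have Fm: "(\<lambda>x::'a. \<Prod>b\<in>Basis. f b (x \<bullet> b)) \<in> borel_measurable borel" by measurable
  have eq: "(\<lambda>x. \<Prod>b\<in>Basis. f b (?T x \<bullet> b)) = (\<lambda>x. \<Prod>b\<in>Basis. f b (x b))"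
    by (rule ext, rule prod.cong) (auto simp: inn)
  have "integrable (\<Pi>\<^sub>M b\<in>Basis. lborel) (\<lambda>x. \<Prod>b\<in>Basis. f b (x b))"
    by (rule P.product_integrable_prod) (auto intro: fi)
  then have i: "integrable lborel (\<lambda>x::'a. \<Prod>b\<in>Basis. f b (x \<bullet> b))"
    by (subst lborel_eq) (simp add: integrable_distr_eq[OF Tm Fm] eq)
  have "integral\<^sup>L lborel (\<lambda>x::'a. \<Prod>b\<in>Basis. f b (x \<bullet> b)) =
      integral\<^sup>L (\<Pi>\<^sub>M b\<in>Basis. lborel) (\<lambda>x. \<Prod>b\<in>Basis. f b (x b))"
    by (subst lborel_eq) (simp add: integral_distr[OF Tm Fm] eq)
  also have "\<dots> = (\<Prod>b\<in>Basis. integral\<^sup>L lborel (f b))"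
    by (rule P.product_integral_prod) (auto intro: fi)
  finally show ?thesis using i by simp
qed

lemma PL:
  fixes f :: "'n::finite \<Rightarrow> real \<Rightarrow> real"
  assumes fm [measurable]: "\<And>j. f j \<in> borel_measurable borel"
    and fi: "\<And>j. integrable lborel (f j)"
  shows "integrable lborel (\<lambda>t::real^'n. \<Prod>j\<in>UNIV. f j (t $ j)) \<and>
         integral\<^sup>L lborel (\<lambda>t::real^'n. \<Prod>j\<in>UNIV. f j (t $ j)) = (\<Prod>j\<in>UNIV. integral\<^sup>L lborel (f j))"
proof -
  define f' where "f' b = f (SOME j. axis j (1::real) = b)" for b :: "real^'n"
  have f'a: "f' (axis j 1) = f j" for j
  proof -
    have "(SOME j'. axis j' (1::real) = axis j 1) = j"
      by (rule some_equality) (auto simp: axis_eq_axis)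
    then show ?thesis by (simp add: f'_def)
  qed
  have e: "(\<Prod>b\<in>Basis. f' b (x \<bullet> b)) = (\<Prod>j\<in>UNIV. f j (x $ j))" for x :: "real^'n"
    unfolding prod_Basis_cart by (simp add: f'a cart_eq_inner_axis)
  have e2: "(\<Prod>b\<in>(Basis::(real^'n) set). integral\<^sup>L lborel (f' b)) = (\<Prod>j\<in>UNIV. integral\<^sup>L lborel (f j))"
    unfolding prod_Basis_cart by (simp add: f'a)
  have "\<And>b. b \<in> (Basis::(real^'n) set) \<Longrightarrow> f' b \<in> borel_measurable borel \<and> integrable lborel (f' b)"
    by (auto simp: Basis_cart_real f'a fi)
  from PLe[of f', OF conjunct1[OF this] conjunct2[OF this]] show ?thesis
    by (simp add: e e2)
qed



lemma g_facts:
  assumes G: "assumption_G l g"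
  shows "g \<in> borel_measurable borel"
    and "\<And>\<phi>::real\<Rightarrow>real. \<phi> \<in> borel_measurable borel \<Longrightarrow> \<phi> 0 = 0 \<Longrightarrow> continuous_on UNIV \<phi> \<Longrightarrow>
           integrable lborel (\<lambda>x. \<phi> (g x))"
    and "integral\<^sup>L lborel g = 1"
proof -
  let ?I = "{-1/2..1/2::real}"
  have z: "x \<notin> ?I \<Longrightarrow> g x = 0" for x using G by (auto simp: assumption_G_def)
  have c: "continuous_on ?I g" using G by (auto simp: assumption_G_def intro: C1_differentiable_imp_continuous_on)
  have geq: "g = (\<lambda>x. indicator ?I x *\<^sub>R g x)" using z by (auto simp: indicator_def fun_eq_iff)
  show gm: "g \<in> borel_measurable borel"
    by (subst geq) (rule borel_measurable_continuous_on_indicator[OF _ c], simp)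
  show "integrable lborel (\<lambda>x. \<phi> (g x))" if pm: "\<phi> \<in> borel_measurable borel" and p0: "\<phi> 0 = 0"
    and pc: "continuous_on UNIV \<phi>" for \<phi> :: "real \<Rightarrow> real"
  proof -
    have "continuous_on ?I (\<lambda>x. \<phi> (g x))"
      by (rule continuous_on_compose2[OF pc c]) auto
    then have "bounded ((\<lambda>x. \<phi> (g x)) ` ?I)"
      by (intro compact_imp_bounded compact_continuous_image) auto
    then obtain B where B: "\<And>x. x \<in> ?I \<Longrightarrow> norm (\<phi> (g x)) \<le> B"
      unfolding bounded_iff by blast
    show ?thesis
    proof (rule Bochner_Integration.integrable_bound[where f="\<lambda>x. B * indicator ?I x"])
      show "integrable lborel (\<lambda>x. B * indicator ?I x)"
        by (rule integrable_mult_right) (simp)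
      show "(\<lambda>x. \<phi> (g x)) \<in> borel_measurable lborel" using gm pm by simp
      show "AE x in lborel. norm (\<phi> (g x)) \<le> norm (B * indicator ?I x)"
      proof (rule AE_I2)
        fix x show "norm (\<phi> (g x)) \<le> norm (B * indicator ?I x)"
          using B[of x] z[of x] p0 by (cases "x \<in> ?I") (auto simp: indicator_def)
      qed
    qed
  qed
  from this[of "\<lambda>x. x"] have gi: "integrable lborel g" by simp
  have "(g has_integral 1) ?I" using G by (simp add: assumption_G_def)
  then have "((\<lambda>x. if x \<in> ?I then g x else 0) has_integral 1) UNIV"
    by (rule has_integral_restrict_UNIV[THEN iffD2])
  moreover have "(\<lambda>x. if x \<in> ?I then g x else 0) = g" using z by auto
  ultimately have "(g has_integral 1) UNIV" by simp
  then show "integral\<^sup>L lborel g = 1"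
    using has_integral_integral_lborel[OF gi] has_integral_unique by blast
qed

lemma scale1:
  fixes \<phi> :: "real \<Rightarrow> real"
  assumes "integrable lborel \<phi>" "h > 0"
  shows "integrable lborel (\<lambda>x. \<phi> (x / h)) \<and> integral\<^sup>L lborel (\<lambda>x. \<phi> (x / h)) = h * integral\<^sup>L lborel \<phi>"
proof -
  have i: "integrable lborel (\<lambda>x. \<phi> (0 + (1/h) * x))"
    using assms by (intro lborel_integrable_real_affine) auto
  have "integral\<^sup>L lborel \<phi> = \<bar>1/h\<bar> *\<^sub>R integral\<^sup>L lborel (\<lambda>x. \<phi> (0 + (1/h) * x))"
    using assms by (intro lborel_integral_real_affine) auto
  then show ?thesis using i assms by (simp add: field_simps)
qed

lemma CS_int:
  fixes X Y :: "'a \<Rightarrow> real"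
  assumes [measurable]: "X \<in> borel_measurable M" "Y \<in> borel_measurable M"
    and iX: "integrable M (\<lambda>x. (X x)\<^sup>2)" and iY: "integrable M (\<lambda>x. (Y x)\<^sup>2)"
  shows "integrable M (\<lambda>x. X x * Y x) \<and>
    integral\<^sup>L M (\<lambda>x. X x * Y x) \<le> sqrt (integral\<^sup>L M (\<lambda>x. (X x)\<^sup>2)) * sqrt (integral\<^sup>L M (\<lambda>x. (Y x)\<^sup>2))"
proof -
  have iXY: "integrable M (\<lambda>x. X x * Y x)"
  proof (rule Bochner_Integration.integrable_bound[where f="\<lambda>x. (X x)\<^sup>2 + (Y x)\<^sup>2"])
    show "integrable M (\<lambda>x. (X x)\<^sup>2 + (Y x)\<^sup>2)" using iX iY by simp
    show "(\<lambda>x. X x * Y x) \<in> borel_measurable M" by measurable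
    show "AE x in M. norm (X x * Y x) \<le> norm ((X x)\<^sup>2 + (Y x)\<^sup>2)"
    proof (rule AE_I2)
      fix x
      have "2 * \<bar>X x * Y x\<bar> \<le> (X x)\<^sup>2 + (Y x)\<^sup>2"
        using sum_squares_bound[of "\<bar>X x\<bar>" "\<bar>Y x\<bar>"] by (simp add: abs_mult)
      then show "norm (X x * Y x) \<le> norm ((X x)\<^sup>2 + (Y x)\<^sup>2)" by simp
    qed
  qed
  define A where "A = integral\<^sup>L M (\<lambda>x. (X x)\<^sup>2)"
  define B where "B = integral\<^sup>L M (\<lambda>x. (Y x)\<^sup>2)"
  define S where "S = integral\<^sup>L M (\<lambda>x. X x * Y x)"
  have A0: "A \<ge> 0" unfolding A_def by (intro integral_nonneg_AE) auto
  have B0: "B \<ge> 0" unfolding B_def by (intro integral_nonneg_AE) auto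
  have lam: "2 * S \<le> t * A + B / t" if t: "t > 0" for t
  proof -
    have "2 * S = integral\<^sup>L M (\<lambda>x. 2 * (X x * Y x))" unfolding S_def by simp
    also have "\<dots> \<le> integral\<^sup>L M (\<lambda>x. t * (X x)\<^sup>2 + (Y x)\<^sup>2 / t)"
    proof (rule integral_mono)
      show "integrable M (\<lambda>x. 2 * (X x * Y x))" using iXY by simp
      show "integrable M (\<lambda>x. t * (X x)\<^sup>2 + (Y x)\<^sup>2 / t)" using iX iY by simp
      fix x
      have "0 \<le> (t * X x - Y x)\<^sup>2 / t" using t by simp
      also have "(t * X x - Y x)\<^sup>2 / t = t * (X x)\<^sup>2 + (Y x)\<^sup>2 / t - 2 * (X x * Y x)"
        using t by (simp add: field_simps power2_eq_square)
      finally show "2 * (X x * Y x) \<le> t * (X x)\<^sup>2 + (Y x)\<^sup>2 / t" by simp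
    qed
    also have "\<dots> = t * A + B / t" unfolding A_def B_def using iX iY by simp
    finally show ?thesis .
  qed
  have "S \<le> sqrt A * sqrt B"
  proof (cases "A > 0 \<and> B > 0")
    case True
    have "2 * S \<le> (sqrt B / sqrt A) * A + B / (sqrt B / sqrt A)" using True by (intro lam) auto
    also have "\<dots> = 2 * (sqrt A * sqrt B)"
      using True A0 B0 by (simp add: field_simps)
    finally show ?thesis by simp
  next
    case False
    show ?thesis
    proof (rule ccontr)
      assume "\<not> S \<le> sqrt A * sqrt B"
      then have Sp: "S > 0" using False A0 B0 by auto
      show False
      proof (cases "A = 0")
        case True
        have "2 * S \<le> ((B + 1) / S) * A + B / ((B + 1) / S)" using Sp B0 by (intro lam) auto
        also have "\<dots> = B * S / (B + 1)" using True Sp B0 by (simp add: field_simps)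
        also have "\<dots> < S" using Sp B0 by (simp add: field_simps)
        finally show False using Sp by simp
      next
        case False
        then have "B = 0" using \<open>\<not> (A > 0 \<and> B > 0)\<close> A0 B0 by auto
        have "2 * S \<le> (S / (A + 1)) * A + B / (S / (A + 1))" using Sp A0 by (intro lam) auto
        also have "\<dots> = S * A / (A + 1)" using \<open>B = 0\<close> Sp A0 by (simp add: field_simps)
        also have "\<dots> < S" using Sp A0 by (simp add: field_simps)
        finally show False using Sp by simp
      qed
    qed
  qed
  then show ?thesis using iXY unfolding A_def B_def S_def by simp
qed

lemma L2tri:
  fixes X Y :: "'a \<Rightarrow> real"
  assumes [measurable]: "X \<in> borel_measurable M" "Y \<in> borel_measurable M"
    and iX: "integrable M (\<lambda>x. (X x)\<^sup>2)" and iY: "integrable M (\<lambda>x. (Y x)\<^sup>2)"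
  shows "integrable M (\<lambda>x. (X x + Y x)\<^sup>2) \<and>
    sqrt (integral\<^sup>L M (\<lambda>x. (X x + Y x)\<^sup>2)) \<le> sqrt (integral\<^sup>L M (\<lambda>x. (X x)\<^sup>2)) + sqrt (integral\<^sup>L M (\<lambda>x. (Y x)\<^sup>2))"
proof -
  note cs = CS_int[OF assms]
  have e: "(\<lambda>x. (X x + Y x)\<^sup>2) = (\<lambda>x. (X x)\<^sup>2 + 2 * (X x * Y x) + (Y x)\<^sup>2)"
    by (simp add: power2_sum fun_eq_iff algebra_simps)
  have i: "integrable M (\<lambda>x. (X x + Y x)\<^sup>2)" unfolding e using cs iX iY by simp
  define A where "A = integral\<^sup>L M (\<lambda>x. (X x)\<^sup>2)"
  define B where "B = integral\<^sup>L M (\<lambda>x. (Y x)\<^sup>2)"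
  have A0: "A \<ge> 0" unfolding A_def by (intro integral_nonneg_AE) auto
  have B0: "B \<ge> 0" unfolding B_def by (intro integral_nonneg_AE) auto
  have "integral\<^sup>L M (\<lambda>x. (X x + Y x)\<^sup>2) = A + 2 * integral\<^sup>L M (\<lambda>x. X x * Y x) + B"
    unfolding e A_def B_def using cs iX iY by simp
  also have "\<dots> \<le> A + 2 * (sqrt A * sqrt B) + B" using cs unfolding A_def B_def by simp
  also have "\<dots> = (sqrt A + sqrt B)\<^sup>2" using A0 B0 by (simp add: power2_sum)
  finally have "sqrt (integral\<^sup>L M (\<lambda>x. (X x + Y x)\<^sup>2)) \<le> sqrt ((sqrt A + sqrt B)\<^sup>2)"
    by (rule real_sqrt_le_mono)
  also have "\<dots> = sqrt A + sqrt B" using A0 B0 by simp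
  finally show ?thesis using i unfolding A_def B_def by simp
qed

lemma L2sum:
  fixes F :: "'i \<Rightarrow> 'a \<Rightarrow> real"
  assumes "finite S" and "\<And>i. i \<in> S \<Longrightarrow> F i \<in> borel_measurable M"
    and "\<And>i. i \<in> S \<Longrightarrow> integrable M (\<lambda>x. (F i x)\<^sup>2)"
  shows "integrable M (\<lambda>x. (\<Sum>i\<in>S. F i x)\<^sup>2) \<and>
    sqrt (integral\<^sup>L M (\<lambda>x. (\<Sum>i\<in>S. F i x)\<^sup>2)) \<le> (\<Sum>i\<in>S. sqrt (integral\<^sup>L M (\<lambda>x. (F i x)\<^sup>2)))"
  using assms
proof (induction S rule: finite_induct)
  case empty then show ?case by simp
next
  case (insert a S)
  have m: "(\<lambda>x. \<Sum>i\<in>S. F i x) \<in> borel_measurable M" using insert by auto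
  note IH = insert.IH[OF insert.prems(1,2)]
  note t = L2tri[OF insert.prems(1)[of a] m insert.prems(2)[of a] conjunct1[OF IH]]
  show ?case using t IH insert.hyps by simp
qed

lemma L2scale:
  fixes X :: "'a \<Rightarrow> real"
  shows "sqrt (integral\<^sup>L M (\<lambda>x. (c * X x)\<^sup>2)) = \<bar>c\<bar> * sqrt (integral\<^sup>L M (\<lambda>x. (X x)\<^sup>2))"
  by (simp add: power_mult_distrib real_sqrt_mult)



lemma Gh_prod: "Gh g A h t = (\<Prod>j\<in>UNIV. (if j \<in> A then g (t $ j / h $ j) * (1 / h $ j) else g (t $ j)))"
  unfolding Gh_def by (simp add: prod.If_cases Diff_eq Compl_eq_Diff_UNIV[symmetric])

lemma G0_Gh: "G0 g t = Gh g {} h t"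
  unfolding Gh_def G0_def by simp

lemma prod1D:
  fixes A :: "'n::finite set" and h :: "real^'n" and c :: "'n \<Rightarrow> real" and \<phi> :: "real \<Rightarrow> real"
  assumes G: "assumption_G l g" and hpos: "\<forall>j. h $ j > 0"
    and pm [measurable]: "\<phi> \<in> borel_measurable borel" and p0: "\<phi> 0 = 0" and pc: "continuous_on UNIV \<phi>"
  shows "integrable lborel (\<lambda>t::real^'n. \<Prod>j\<in>UNIV. (if j \<in> A then \<phi> (g (t $ j / h $ j)) * c j else \<phi> (g (t $ j)))) \<and>
    integral\<^sup>L lborel (\<lambda>t::real^'n. \<Prod>j\<in>UNIV. (if j \<in> A then \<phi> (g (t $ j / h $ j)) * c j else \<phi> (g (t $ j))))
     = (\<Prod>j\<in>UNIV. (if j \<in> A then h $ j * c j * integral\<^sup>L lborel (\<lambda>x. \<phi> (g x)) else integral\<^sup>L lborel (\<lambda>x. \<phi> (g x))))"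
proof -
  have gm [measurable]: "g \<in> borel_measurable borel" using g_facts(1)[OF G] .
  have pgi: "integrable lborel (\<lambda>x. \<phi> (g x))" using g_facts(2)[OF G pm p0 pc] .
  define f where "f j = (\<lambda>x. if j \<in> A then \<phi> (g (x / h $ j)) * c j else \<phi> (g x))" for j
  have fm: "f j \<in> borel_measurable borel" for j unfolding f_def by (cases "j \<in> A") auto
  have fi: "integrable lborel (f j) \<and> integral\<^sup>L lborel (f j) =
      (if j \<in> A then h $ j * c j * integral\<^sup>L lborel (\<lambda>x. \<phi> (g x)) else integral\<^sup>L lborel (\<lambda>x. \<phi> (g x)))" for j
  proof (cases "j \<in> A")
    case True
    have s: "integrable lborel (\<lambda>x. \<phi> (g (x / h $ j))) \<and> integral\<^sup>L lborel (\<lambda>x. \<phi> (g (x / h $ j))) = h $ j * integral\<^sup>L lborel (\<lambda>x. \<phi> (g x))"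
      using scale1[OF pgi, of "h $ j"] hpos by simp
    then show ?thesis using True unfolding f_def by simp
  next
    case False then show ?thesis using pgi unfolding f_def by simp
  qed
  have "integrable lborel (\<lambda>t::real^'n. \<Prod>j\<in>UNIV. f j (t $ j)) \<and>
        integral\<^sup>L lborel (\<lambda>t::real^'n. \<Prod>j\<in>UNIV. f j (t $ j)) = (\<Prod>j\<in>UNIV. integral\<^sup>L lborel (f j))"
    by (rule PL) (use fm fi in auto)
  then show ?thesis using fi unfolding f_def by (simp cong: if_cong)
qed



lemma Gh_facts:
  fixes A :: "'n::finite set" and h :: "real^'n"
  assumes G: "assumption_G l g" and hpos: "\<forall>j. h $ j > 0"
  shows "integrable lborel (Gh g A h) \<and> integral\<^sup>L lborel (Gh g A h) = 1"
    and "integrable lborel (\<lambda>t. \<bar>Gh g A h t\<bar>) \<and>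
         integral\<^sup>L lborel (\<lambda>t. \<bar>Gh g A h t\<bar>) = (integral\<^sup>L lborel (\<lambda>x. \<bar>g x\<bar>)) ^ CARD('n)"
    and "integrable lborel (\<lambda>t. (Gh g A h t)\<^sup>2) \<and>
         integral\<^sup>L lborel (\<lambda>t. (Gh g A h t)\<^sup>2) = (integral\<^sup>L lborel (\<lambda>x. (g x)\<^sup>2)) ^ CARD('n) * (\<Prod>j\<in>A. 1 / h $ j)"
proof -
  have h0: "h $ j \<noteq> 0" for j using hpos by (metis less_irrefl)
  have habs: "\<bar>h $ j\<bar> = h $ j" for j using hpos by (simp add: abs_of_pos)
  have g1: "integral\<^sup>L lborel g = 1" using g_facts(3)[OF G] .
  show "integrable lborel (Gh g A h) \<and> integral\<^sup>L lborel (Gh g A h) = 1"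
  proof -
    have e: "Gh g A h = (\<lambda>t. \<Prod>j\<in>UNIV. (if j \<in> A then g (t $ j / h $ j) * (1 / h $ j) else g (t $ j)))"
      by (simp add: fun_eq_iff Gh_prod)
    have "(\<Prod>j\<in>UNIV. (if j \<in> A then h $ j * (1 / h $ j) * integral\<^sup>L lborel (\<lambda>x. g x) else integral\<^sup>L lborel (\<lambda>x. g x))) = 1"
      using h0 g1 by (simp add: prod.neutral)
    moreover have "integrable lborel (\<lambda>t::real^'n. \<Prod>j\<in>UNIV. (if j \<in> A then g (t $ j / h $ j) * (1 / h $ j) else g (t $ j))) \<and>
      integral\<^sup>L lborel (\<lambda>t::real^'n. \<Prod>j\<in>UNIV. (if j \<in> A then g (t $ j / h $ j) * (1 / h $ j) else g (t $ j)))
       = (\<Prod>j\<in>UNIV. (if j \<in> A then h $ j * (1 / h $ j) * integral\<^sup>L lborel (\<lambda>x. g x) else integral\<^sup>L lborel (\<lambda>x. g x)))"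
      by (rule prod1D[OF G hpos, of "\<lambda>x. x"]) auto
    ultimately show ?thesis unfolding e by simp
  qed
  show "integrable lborel (\<lambda>t. \<bar>Gh g A h t\<bar>) \<and>
         integral\<^sup>L lborel (\<lambda>t. \<bar>Gh g A h t\<bar>) = (integral\<^sup>L lborel (\<lambda>x. \<bar>g x\<bar>)) ^ CARD('n)"
  proof -
    have e: "(\<lambda>t. \<bar>Gh g A h t\<bar>) = (\<lambda>t. \<Prod>j\<in>UNIV. (if j \<in> A then \<bar>g (t $ j / h $ j)\<bar> * (1 / h $ j) else \<bar>g (t $ j)\<bar>))"
      by (simp add: fun_eq_iff Gh_prod abs_prod abs_mult if_distrib habs cong: if_cong)
    have "(\<Prod>j\<in>UNIV. (if j \<in> A then h $ j * (1 / h $ j) * integral\<^sup>L lborel (\<lambda>x. \<bar>g x\<bar>) else integral\<^sup>L lborel (\<lambda>x. \<bar>g x\<bar>)))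
       = (integral\<^sup>L lborel (\<lambda>x. \<bar>g x\<bar>)) ^ CARD('n)"
    proof -
      have "(if j \<in> A then h $ j * (1 / h $ j) * integral\<^sup>L lborel (\<lambda>x. \<bar>g x\<bar>) else integral\<^sup>L lborel (\<lambda>x. \<bar>g x\<bar>))
          = integral\<^sup>L lborel (\<lambda>x. \<bar>g x\<bar>)" for j using h0[of j] by simp
      then show ?thesis by simp
    qed
    moreover have "integrable lborel (\<lambda>t::real^'n. \<Prod>j\<in>UNIV. (if j \<in> A then \<bar>g (t $ j / h $ j)\<bar> * (1 / h $ j) else \<bar>g (t $ j)\<bar>)) \<and>
      integral\<^sup>L lborel (\<lambda>t::real^'n. \<Prod>j\<in>UNIV. (if j \<in> A then \<bar>g (t $ j / h $ j)\<bar> * (1 / h $ j) else \<bar>g (t $ j)\<bar>))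
       = (\<Prod>j\<in>UNIV. (if j \<in> A then h $ j * (1 / h $ j) * integral\<^sup>L lborel (\<lambda>x. \<bar>g x\<bar>) else integral\<^sup>L lborel (\<lambda>x. \<bar>g x\<bar>)))"
      by (rule prod1D[OF G hpos, of "\<lambda>x. \<bar>x\<bar>"]) (auto intro: continuous_intros)
    ultimately show ?thesis unfolding e by simp
  qed
  show "integrable lborel (\<lambda>t. (Gh g A h t)\<^sup>2) \<and>
         integral\<^sup>L lborel (\<lambda>t. (Gh g A h t)\<^sup>2) = (integral\<^sup>L lborel (\<lambda>x. (g x)\<^sup>2)) ^ CARD('n) * (\<Prod>j\<in>A. 1 / h $ j)"
  proof -
    have e: "(\<lambda>t. (Gh g A h t)\<^sup>2) = (\<lambda>t. \<Prod>j\<in>UNIV. (if j \<in> A then (g (t $ j / h $ j))\<^sup>2 * (1 / (h $ j)\<^sup>2) else (g (t $ j))\<^sup>2))"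
      by (auto simp: fun_eq_iff Gh_prod prod_power_distrib power_divide intro!: prod.cong)
    have "(\<Prod>j\<in>UNIV. (if j \<in> A then h $ j * (1 / (h $ j)\<^sup>2) * integral\<^sup>L lborel (\<lambda>x. (g x)\<^sup>2) else integral\<^sup>L lborel (\<lambda>x. (g x)\<^sup>2)))
       = (\<Prod>j\<in>UNIV. integral\<^sup>L lborel (\<lambda>x. (g x)\<^sup>2) * (if j \<in> A then 1 / h $ j else 1))"
      using h0 by (intro prod.cong) (auto simp: power2_eq_square)
    also have "\<dots> = (integral\<^sup>L lborel (\<lambda>x. (g x)\<^sup>2)) ^ CARD('n) * (\<Prod>j\<in>A. 1 / h $ j)"
      by (simp add: prod.distrib prod.If_cases)
    finally have eq: "(\<Prod>j\<in>UNIV. (if j \<in> A then h $ j * (1 / (h $ j)\<^sup>2) * integral\<^sup>L lborel (\<lambda>x. (g x)\<^sup>2) else integral\<^sup>L lborel (\<lambda>x. (g x)\<^sup>2)))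
       = (integral\<^sup>L lborel (\<lambda>x. (g x)\<^sup>2)) ^ CARD('n) * (\<Prod>j\<in>A. 1 / h $ j)" .
    have "integrable lborel (\<lambda>t::real^'n. \<Prod>j\<in>UNIV. (if j \<in> A then (g (t $ j / h $ j))\<^sup>2 * (1 / (h $ j)\<^sup>2) else (g (t $ j))\<^sup>2)) \<and>
      integral\<^sup>L lborel (\<lambda>t::real^'n. \<Prod>j\<in>UNIV. (if j \<in> A then (g (t $ j / h $ j))\<^sup>2 * (1 / (h $ j)\<^sup>2) else (g (t $ j))\<^sup>2))
       = (\<Prod>j\<in>UNIV. (if j \<in> A then h $ j * (1 / (h $ j)\<^sup>2) * integral\<^sup>L lborel (\<lambda>x. (g x)\<^sup>2) else integral\<^sup>L lborel (\<lambda>x. (g x)\<^sup>2)))"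
      by (rule prod1D[OF G hpos, of "\<lambda>x. x\<^sup>2"]) (auto intro: continuous_intros)
    then show ?thesis unfolding e eq by simp
  qed
qed



lemma alg1:
  fixes d S p :: real
  assumes "d > 0" "S \<ge> 0" "p \<ge> 0"
  shows "d * sqrt (S ^ n * p / d) = d powr (1/2) * sqrt S ^ n * sqrt p"
proof -
  have "sqrt (S ^ n * p / d) = sqrt S ^ n * sqrt p / sqrt d"
    by (simp add: real_sqrt_mult real_sqrt_divide real_sqrt_power)
  moreover have "d / sqrt d = sqrt d" using assms(1)
    by (metis less_eq_real_def real_div_sqrt)
  moreover have "d powr (1/2) = sqrt d" using assms(1) by (simp add: powr_half_sqrt)
  ultimately show ?thesis by (metis (no_types, lifting) times_divide_eq_left mult.commute mult.assoc times_divide_eq_right)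
qed

lemma alg2:
  fixes h :: "real^'n::finite"
  assumes "\<forall>j. h $ j > 0"
  shows "sqrt (\<Prod>j\<in>A. 1 / h $ j) = (\<Prod>j\<in>A. h $ j powr (-1/2))"
proof -
  have "sqrt (\<Prod>j\<in>A. 1 / h $ j) = (\<Prod>j\<in>A. 1 / h $ j) powr (1/2)"
    using assms by (intro powr_half_sqrt[symmetric] prod_nonneg) (auto simp: less_imp_le)
  also have "\<dots> = (\<Prod>j\<in>A. (1 / h $ j) powr (1/2))" by (rule prod_powr_distrib)
  also have "\<dots> = (\<Prod>j\<in>A. h $ j powr (-1/2))"
    using assms by (intro prod.cong refl) (simp add: powr_divide powr_minus_divide less_imp_le)
  finally show ?thesis .
qed



theorem lemma3:
  fixes g :: "real \<Rightarrow> real" and l :: nat and \<eta> :: real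
    and P :: "'n::finite set set" and E :: "real^'n^'n" and h :: "real^'n"
  assumes G: "assumption_G l g"
    and eta: "\<eta> > 0"
    and part: "partition_on UNIV P"
    and E: "E \<in> E_eta \<eta>"
    and h: "\<forall>j. h $ j > 0"
  shows "(Ktheta g P E h has_integral 1) UNIV
    \<and> Ktheta g P E h absolutely_integrable_on UNIV
    \<and> integral UNIV (\<lambda>t. \<bar>Ktheta g P E h t\<bar>)
           \<le> (2 * real (card P) - 1) * (integral UNIV (\<lambda>x. \<bar>g x\<bar>)) ^ CARD('n)
    \<and> (\<lambda>t. (Ktheta g P E h t)\<^sup>2) integrable_on UNIV
    \<and> sqrt (integral UNIV (\<lambda>t. (Ktheta g P E h t)\<^sup>2))
           \<le> \<bar>det E\<bar> powr (1/2) * (sqrt (integral UNIV (\<lambda>x. (g x)\<^sup>2))) ^ CARD('n)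
             * ((\<Sum>A\<in>P. \<Prod>j\<in>A. h $ j powr (-1/2)) + real (card P) - 1)"
proof -
  define d where "d = \<bar>det E\<bar>"
  define M where "M = transpose E"
  define c where "c = real (card P)"
  define K where "K = Ktheta g P E h"
  define Ga where "Ga = integral\<^sup>L lborel (\<lambda>x. \<bar>g x\<bar>)"
  define Gs where "Gs = integral\<^sup>L lborel (\<lambda>x. (g x)\<^sup>2)"
  define \<Phi> where "\<Phi> A t = Gh g A h (M *v t)" for A t
  have d0: "d > 0" using E eta unfolding E_eta_def d_def by auto
  have dM: "det M \<noteq> 0" using d0 unfolding d_def M_def by (simp add: det_transpose)
  have dM': "\<bar>det M\<bar> = d" unfolding d_def M_def by (simp add: det_transpose)
  have finP: "finite P" by (rule finite_subset[OF subset_UNIV]) simp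
  have "P \<noteq> {}" using part unfolding partition_on_def by auto
  then have c1: "c \<ge> 1" unfolding c_def using finP by (simp add: Suc_le_eq card_gt_0_iff)
  have gm[measurable]: "g \<in> borel_measurable borel" using g_facts(1)[OF G] .
  have gai: "integrable lborel (\<lambda>x. \<bar>g x\<bar>)"
    by (rule g_facts(2)[OF G]) (auto intro: continuous_intros)
  have gsi: "integrable lborel (\<lambda>x. (g x)\<^sup>2)"
    by (rule g_facts(2)[OF G]) (auto intro: continuous_intros)
  have Ga0: "Ga \<ge> 0" unfolding Ga_def by simp
  have Gs0: "Gs \<ge> 0" unfolding Gs_def by simp
  note GF = Gh_facts[OF G h]
  have CV': "integrable lborel (\<lambda>t. F (M *v t)) \<and> integral\<^sup>L lborel (\<lambda>t. F (M *v t)) = integral\<^sup>L lborel F / d"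
    if "integrable lborel F" for F
  proof -
    have "F \<in> borel_measurable borel" using borel_measurable_integrable[OF that] by simp
    then show ?thesis using CVn[OF dM _ that] dM' by simp
  qed
  have Phi1: "integrable lborel (\<Phi> A) \<and> integral\<^sup>L lborel (\<Phi> A) = 1 / d" for A
    using CV'[OF conjunct1[OF GF(1)[of A]]] GF(1)[of A] unfolding \<Phi>_def by simp
  have Phi2: "integrable lborel (\<lambda>t. \<bar>\<Phi> A t\<bar>) \<and> integral\<^sup>L lborel (\<lambda>t. \<bar>\<Phi> A t\<bar>) = Ga ^ CARD('n) / d" for A
    using CV'[OF conjunct1[OF GF(2)[of A]]] GF(2)[of A] unfolding \<Phi>_def Ga_def by simp
  have Phi3: "integrable lborel (\<lambda>t. (\<Phi> A t)\<^sup>2) \<and>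
      integral\<^sup>L lborel (\<lambda>t. (\<Phi> A t)\<^sup>2) = Gs ^ CARD('n) * (\<Prod>j\<in>A. 1 / h $ j) / d" for A
    using CV'[OF conjunct1[OF GF(3)[of A]]] GF(3)[of A] unfolding \<Phi>_def Gs_def by simp
  have Phim[measurable]: "\<Phi> A \<in> borel_measurable borel" for A
    using borel_measurable_integrable[OF conjunct1[OF Phi1]] by simp
  have Keq: "K t = d * (\<Sum>A\<in>P. \<Phi> A t) - (c - 1) * d * \<Phi> {} t" for t
    unfolding K_def Ktheta_def d_def c_def \<Phi>_def M_def G0_Gh[of g _ h] ..
  have Keq': "K = (\<lambda>t. d * (\<Sum>A\<in>P. \<Phi> A t) - (c - 1) * d * \<Phi> {} t)"
    using Keq by auto
  have Ki: "integrable lborel K" unfolding Keq' using Phi1 by auto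
  have Km[measurable]: "K \<in> borel_measurable borel" using borel_measurable_integrable[OF Ki] by simp
  have "integral\<^sup>L lborel K = d * (\<Sum>A\<in>P. integral\<^sup>L lborel (\<Phi> A)) - (c - 1) * d * integral\<^sup>L lborel (\<Phi> {})"
    unfolding Keq' using Phi1 by (simp add: integral_sum)
  also have "\<dots> = d * (c * (1 / d)) - (c - 1) * d * (1 / d)"
    using Phi1 by (simp add: c_def)
  also have "\<dots> = 1" using d0 by (simp add: field_simps)
  finally have K1: "integral\<^sup>L lborel K = 1" .
  have R1: "(K has_integral 1) UNIV" using has_integral_integral_lborel[OF Ki] K1 by simp
  have R2: "K absolutely_integrable_on UNIV" using Ki by (simp add: abs_int_lborel)
  (* L1 *)
  have Kai: "integrable lborel (\<lambda>t. \<bar>K t\<bar>)" using Ki by simp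
  have "integral\<^sup>L lborel (\<lambda>t. \<bar>K t\<bar>) \<le> integral\<^sup>L lborel (\<lambda>t. d * (\<Sum>A\<in>P. \<bar>\<Phi> A t\<bar>) + (c - 1) * d * \<bar>\<Phi> {} t\<bar>)"
  proof (rule integral_mono[OF Kai])
    show "integrable lborel (\<lambda>t. d * (\<Sum>A\<in>P. \<bar>\<Phi> A t\<bar>) + (c - 1) * d * \<bar>\<Phi> {} t\<bar>)"
      using Phi2 by auto
    fix t
    have "\<bar>K t\<bar> \<le> \<bar>d * (\<Sum>A\<in>P. \<Phi> A t)\<bar> + \<bar>(c - 1) * d * \<Phi> {} t\<bar>"
      unfolding Keq by (rule abs_triangle_ineq4)
    also have "\<bar>d * (\<Sum>A\<in>P. \<Phi> A t)\<bar> \<le> d * (\<Sum>A\<in>P. \<bar>\<Phi> A t\<bar>)"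
      using d0 by (simp add: abs_mult sum_abs)
    also have "\<bar>(c - 1) * d * \<Phi> {} t\<bar> = (c - 1) * d * \<bar>\<Phi> {} t\<bar>"
      using d0 c1 by (simp add: abs_mult)
    finally show "\<bar>K t\<bar> \<le> d * (\<Sum>A\<in>P. \<bar>\<Phi> A t\<bar>) + (c - 1) * d * \<bar>\<Phi> {} t\<bar>" by simp
  qed
  also have "\<dots> = d * (\<Sum>A\<in>P. Ga ^ CARD('n) / d) + (c - 1) * d * (Ga ^ CARD('n) / d)"
    using Phi2 by (simp add: integral_sum)
  also have "\<dots> = d * (c * (Ga ^ CARD('n) / d)) + (c - 1) * d * (Ga ^ CARD('n) / d)"
    by (simp add: c_def)
  also have "\<dots> = (2 * c - 1) * Ga ^ CARD('n)" using d0 by (simp add: field_simps)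
  finally have L1: "integral\<^sup>L lborel (\<lambda>t. \<bar>K t\<bar>) \<le> (2 * c - 1) * Ga ^ CARD('n)" .
  have HGa: "integral UNIV (\<lambda>x. \<bar>g x\<bar>) = Ga" unfolding Ga_def using gai by (rule integral_lborel)
  have HGs: "integral UNIV (\<lambda>x. (g x)\<^sup>2) = Gs" unfolding Gs_def using gsi by (rule integral_lborel)
  have R3: "integral UNIV (\<lambda>t. \<bar>K t\<bar>) \<le> (2 * c - 1) * (integral UNIV (\<lambda>x. \<bar>g x\<bar>)) ^ CARD('n)"
    using L1 integral_lborel[OF Kai] HGa by simp
  (* L2 *)
  define X where "X t = (\<Sum>A\<in>P. d * \<Phi> A t)" for t
  define Y where "Y t = - ((c - 1) * d) * \<Phi> {} t" for t
  have KXY: "K t = X t + Y t" for t unfolding Keq X_def Y_def by (simp add: sum_distrib_left)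
  have sq: "integrable lborel (\<lambda>t. (d * \<Phi> A t)\<^sup>2)" for A
    using Phi3[of A] by (simp add: power_mult_distrib)
  note LS = L2sum[of P "\<lambda>A t. d * \<Phi> A t" lborel, OF finP _ sq]
  have Xm[measurable]: "X \<in> borel_measurable borel" unfolding X_def by measurable
  have Ym[measurable]: "Y \<in> borel_measurable borel" unfolding Y_def by measurable
  have iX: "integrable lborel (\<lambda>t. (X t)\<^sup>2)" using LS unfolding X_def by simp
  have iY: "integrable lborel (\<lambda>t. (Y t)\<^sup>2)" using Phi3[of "{}"] unfolding Y_def by (simp add: power_mult_distrib)
  note T = L2tri[OF _ _ iX iY]
  have Ksi: "integrable lborel (\<lambda>t. (K t)\<^sup>2)" using T by (simp add: KXY)
  have "sqrt (integral\<^sup>L lborel (\<lambda>t. (K t)\<^sup>2)) \<le>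
      sqrt (integral\<^sup>L lborel (\<lambda>t. (X t)\<^sup>2)) + sqrt (integral\<^sup>L lborel (\<lambda>t. (Y t)\<^sup>2))"
    using T by (simp add: KXY)
  also have "sqrt (integral\<^sup>L lborel (\<lambda>t. (X t)\<^sup>2)) \<le> (\<Sum>A\<in>P. sqrt (integral\<^sup>L lborel (\<lambda>t. (d * \<Phi> A t)\<^sup>2)))"
    using LS unfolding X_def by simp
  also have "\<dots> = (\<Sum>A\<in>P. d powr (1/2) * sqrt Gs ^ CARD('n) * (\<Prod>j\<in>A. h $ j powr (-1/2)))"
  proof (rule sum.cong[OF refl])
    fix A
    have "sqrt (integral\<^sup>L lborel (\<lambda>t. (d * \<Phi> A t)\<^sup>2)) = d * sqrt (Gs ^ CARD('n) * (\<Prod>j\<in>A. 1 / h $ j) / d)"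
      using L2scale[of lborel d "\<Phi> A"] Phi3[of A] d0 by simp
    also have "\<dots> = d powr (1/2) * sqrt Gs ^ CARD('n) * sqrt (\<Prod>j\<in>A. 1 / h $ j)"
      using d0 Gs0 h by (intro alg1 prod_nonneg) (auto simp: less_imp_le)
    finally show "sqrt (integral\<^sup>L lborel (\<lambda>t. (d * \<Phi> A t)\<^sup>2)) = d powr (1/2) * sqrt Gs ^ CARD('n) * (\<Prod>j\<in>A. h $ j powr (-1/2))"
      by (simp add: alg2[OF h])
  qed
  also have "sqrt (integral\<^sup>L lborel (\<lambda>t. (Y t)\<^sup>2)) = (c - 1) * (d powr (1/2) * sqrt Gs ^ CARD('n))"
  proof -
    have "sqrt (integral\<^sup>L lborel (\<lambda>t. (Y t)\<^sup>2)) = (c - 1) * (d * sqrt (Gs ^ CARD('n) * 1 / d))"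
      using L2scale[of lborel "- ((c - 1) * d)" "\<Phi> {}"] Phi3[of "{}"] d0 c1 unfolding Y_def
      by (simp add: abs_mult)
    also have "d * sqrt (Gs ^ CARD('n) * 1 / d) = d powr (1/2) * sqrt Gs ^ CARD('n) * sqrt 1"
      using d0 Gs0 by (intro alg1) auto
    finally show ?thesis by simp
  qed
  finally have L2: "sqrt (integral\<^sup>L lborel (\<lambda>t. (K t)\<^sup>2)) \<le>
      d powr (1/2) * sqrt Gs ^ CARD('n) * ((\<Sum>A\<in>P. \<Prod>j\<in>A. h $ j powr (-1/2)) + c - 1)"
    by (simp add: sum_distrib_left[symmetric] algebra_simps)
  have R4: "(\<lambda>t. (K t)\<^sup>2) integrable_on UNIV" using Ksi by (rule integrable_on_lborel)
  have R5: "sqrt (integral UNIV (\<lambda>t. (K t)\<^sup>2)) \<le>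
      d powr (1/2) * sqrt (integral UNIV (\<lambda>x. (g x)\<^sup>2)) ^ CARD('n) * ((\<Sum>A\<in>P. \<Prod>j\<in>A. h $ j powr (-1/2)) + c - 1)"
    using L2 integral_lborel[OF Ksi] HGs by simp
  show ?thesis using R1 R2 R3 R4 R5 unfolding K_def c_def d_def by simp
qed

end
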